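(* Let $S$ be a finite poset such that every stochastically monotone discrete-time Markov chain on $S$ is realizably monotone. Then every stochastically monotone (regular) continuous-time Markov chain on $S$ is realizably monotone.
   Context: A Markov chain (discrete or continuous time, time-homogeneous) on a poset $S$ with transition probabilities $P_t(x,y)$ is stochastically monotone if for every $w\le z$ there is a Markov chain $(X^1_t,X^2_t)$ on $S\times S$ started at $(w,z)$ whose components are Markov chains with transition probabilities $P_t$ and with $X^1_t\le X^2_t$ for all $t$. It is realizably monotone if there exists a Markov chain $(\xi_t)$ on $S^S$ with $\xi_0=\mathrm{Id}$, each $(\xi_t(z))$ a Markov chain with transition probabilities $P_t$, and $w\le z\Rightarrow\xi_t(w)\le\xi_t(z)$ for all $t$. A continuous-time chain is regular if it a.s. jumps finitely often in bounded time intervals. *)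

theory Defs
  imports Complex_Main
begin

definition stochastic :: "('s::finite \<Rightarrow> 's \<Rightarrow> real) \<Rightarrow> bool" where
  "stochastic P \<longleftrightarrow> (\<forall>x y. 0 \<le> P x y) \<and> (\<forall>x. (\<Sum>y\<in>UNIV. P x y) = 1)"

fun mpow :: "('s::finite \<Rightarrow> 's \<Rightarrow> real) \<Rightarrow> nat \<Rightarrow> 's \<Rightarrow> 's \<Rightarrow> real" where
  "mpow P 0 x y = (if x = y then 1 else 0)"
| "mpow P (Suc n) x y = (\<Sum>z\<in>UNIV. P x z * mpow P n z y)"

definition markov_semigroup :: "(real \<Rightarrow> 's::finite \<Rightarrow> 's \<Rightarrow> real) \<Rightarrow> bool" where
  "markov_semigroup P \<longleftrightarrow>
     (\<forall>t\<ge>0. stochastic (P t)) \<and>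
     (\<forall>x y. P 0 x y = (if x = y then 1 else 0)) \<and>
     (\<forall>s t x y. 0 \<le> s \<longrightarrow> 0 \<le> t \<longrightarrow> P (s + t) x y = (\<Sum>z\<in>UNIV. P s x z * P t z y)) \<and>
     (\<forall>x y. ((\<lambda>t. P t x y) \<longlongrightarrow> (if x = y then 1 else 0)) (at_right 0))"

text \<open>Probability that the chain with transition family P started in x visits
  successively the given states, each after the given time increment.\<close>
fun path_prob :: "('t \<Rightarrow> 's \<Rightarrow> 's \<Rightarrow> real) \<Rightarrow> 's \<Rightarrow> ('t \<times> 's) list \<Rightarrow> real" where
  "path_prob P x [] = 1"
| "path_prob P x ((d, y) # ps) = P d x y * path_prob P y ps"

text \<open>The process f(Y), where Y is the chain with transition family K started at u,
  is a Markov chain with transition family P started at x: all finite-dimensional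
  distributions agree (adm singles out admissible time increments).\<close>
definition image_markov ::
  "('t \<Rightarrow> 'u::finite \<Rightarrow> 'u \<Rightarrow> real) \<Rightarrow> 'u \<Rightarrow> ('u \<Rightarrow> 's) \<Rightarrow> ('t \<Rightarrow> bool)
    \<Rightarrow> ('t \<Rightarrow> 's \<Rightarrow> 's \<Rightarrow> real) \<Rightarrow> 's \<Rightarrow> bool" where
  "image_markov K u f adm P x \<longleftrightarrow> f u = x \<and>
     (\<forall>ds xs. length ds = length xs \<longrightarrow> (\<forall>d\<in>set ds. adm d) \<longrightarrow>
        (\<Sum>ys\<in>{ys. length ys = length xs \<and> map f ys = xs}. path_prob K u (zip ds ys))
          = path_prob P x (zip ds xs))"

text \<open>Almost surely, the chain with transition family K started at u satisfies Q
  at all admissible times.\<close>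
definition as_always ::
  "('t \<Rightarrow> 'u \<Rightarrow> 'u \<Rightarrow> real) \<Rightarrow> 'u \<Rightarrow> ('t \<Rightarrow> bool) \<Rightarrow> ('u \<Rightarrow> bool) \<Rightarrow> bool" where
  "as_always K u adm Q \<longleftrightarrow> (\<forall>d v. adm d \<longrightarrow> 0 < K d u v \<longrightarrow> Q v)"

definition dt_stoch_monotone :: "('a::{order,finite} \<Rightarrow> 'a \<Rightarrow> real) \<Rightarrow> bool" where
  "dt_stoch_monotone P \<longleftrightarrow> (\<forall>w z. w \<le> z \<longrightarrow>
     (\<exists>K :: ('a \<times> 'a) \<Rightarrow> ('a \<times> 'a) \<Rightarrow> real. stochastic K \<and>
        image_markov (mpow K) (w, z) fst (\<lambda>_. True) (mpow P) w \<and>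
        image_markov (mpow K) (w, z) snd (\<lambda>_. True) (mpow P) z \<and>
        as_always (mpow K) (w, z) (\<lambda>_. True) (\<lambda>(a, b). a \<le> b)))"

definition dt_realizably_monotone :: "('a::{order,finite} \<Rightarrow> 'a \<Rightarrow> real) \<Rightarrow> bool" where
  "dt_realizably_monotone P \<longleftrightarrow>
     (\<exists>K :: ('a \<Rightarrow> 'a) \<Rightarrow> ('a \<Rightarrow> 'a) \<Rightarrow> real. stochastic K \<and>
        (\<forall>z. image_markov (mpow K) id (\<lambda>\<xi>. \<xi> z) (\<lambda>_. True) (mpow P) z) \<and>
        as_always (mpow K) id (\<lambda>_. True) mono)"

definition ct_stoch_monotone :: "(real \<Rightarrow> 'a::{order,finite} \<Rightarrow> 'a \<Rightarrow> real) \<Rightarrow> bool" where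
  "ct_stoch_monotone P \<longleftrightarrow> (\<forall>w z. w \<le> z \<longrightarrow>
     (\<exists>K :: real \<Rightarrow> ('a \<times> 'a) \<Rightarrow> ('a \<times> 'a) \<Rightarrow> real. markov_semigroup K \<and>
        image_markov K (w, z) fst (\<lambda>t. 0 \<le> t) P w \<and>
        image_markov K (w, z) snd (\<lambda>t. 0 \<le> t) P z \<and>
        as_always K (w, z) (\<lambda>t. 0 \<le> t) (\<lambda>(a, b). a \<le> b)))"

definition ct_realizably_monotone :: "(real \<Rightarrow> 'a::{order,finite} \<Rightarrow> 'a \<Rightarrow> real) \<Rightarrow> bool" where
  "ct_realizably_monotone P \<longleftrightarrow>
     (\<exists>K :: real \<Rightarrow> ('a \<Rightarrow> 'a) \<Rightarrow> ('a \<Rightarrow> 'a) \<Rightarrow> real. markov_semigroup K \<and>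
        (\<forall>z. image_markov K id (\<lambda>\<xi>. \<xi> z) (\<lambda>t. 0 \<le> t) P z) \<and>
        as_always K id (\<lambda>t. 0 \<le> t) mono)"

end

theory Submission
  imports Defs "HOL-Analysis.Analysis" "HOL-Real_Asymp.Real_Asymp"
begin

lemma stochastic_nonneg: "stochastic A \<Longrightarrow> 0 \<le> A x y"
  by (simp add: stochastic_def)

lemma stochastic_sum: "stochastic A \<Longrightarrow> (\<Sum>y\<in>UNIV. A x y) = 1"
  by (simp add: stochastic_def)

lemma stochastic_le1: "stochastic A \<Longrightarrow> A x y \<le> 1"
proof -
  assume a: "stochastic A"
  have "A x y \<le> (\<Sum>y\<in>UNIV. A x y)"
    by (rule member_le_sum) (auto simp: stochastic_nonneg[OF a])
  thus ?thesis using stochastic_sum[OF a] by simp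
qed

lemma sum_delta_right: fixes g :: "'s::finite \<Rightarrow> real" shows "(\<Sum>z\<in>UNIV. g z * (if z = y then 1 else 0 :: real)) = g y"
proof -
  have "(\<Sum>z\<in>UNIV. g z * (if z = y then 1 else 0 :: real)) = (\<Sum>z\<in>UNIV. if z = y then g z else 0)"
    by (rule sum.cong) auto
  thus ?thesis by simp
qed

lemma sum_delta_left: fixes g :: "'s::finite \<Rightarrow> real" shows "(\<Sum>z\<in>UNIV. (if x = z then 1 else 0 :: real) * g z) = g x"
proof -
  have "(\<Sum>z\<in>UNIV. (if x = z then 1 else 0 :: real) * g z) = (\<Sum>z\<in>UNIV. if x = z then g z else 0)"
    by (rule sum.cong) auto
  thus ?thesis by simp
qed

lemma mpow_one: "mpow A (Suc 0) x y = A x y"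
  by (simp add: sum_delta_right)

lemma mpow_add: "mpow A (m + n) x y = (\<Sum>z\<in>UNIV. mpow A m x z * mpow A n z y)"
proof (induction m arbitrary: x)
  case 0 thus ?case by (simp add: sum_delta_left)
next
  case (Suc m)
  have "mpow A (Suc m + n) x y = (\<Sum>w\<in>UNIV. A x w * (\<Sum>z\<in>UNIV. mpow A m w z * mpow A n z y))"
    by (simp add: Suc)
  also have "\<dots> = (\<Sum>z\<in>UNIV. (\<Sum>w\<in>UNIV. A x w * mpow A m w z) * mpow A n z y)"
    by (simp add: sum_distrib_left sum_distrib_right mult.assoc) (rule sum.swap)
  finally show ?case by simp
qed

lemma mpow_stochastic: "stochastic A \<Longrightarrow> stochastic (mpow A n)"
proof (induction n)
  case 0 thus ?case by (simp add: stochastic_def)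
next
  case (Suc n)
  then have ih: "stochastic (mpow A n)" by simp
  show ?case unfolding stochastic_def
  proof safe
    fix x y show "0 \<le> mpow A (Suc n) x y"
      using Suc.prems ih by (auto intro!: sum_nonneg mult_nonneg_nonneg simp: stochastic_nonneg)
  next
    fix x
    have "(\<Sum>y\<in>UNIV. mpow A (Suc n) x y) = (\<Sum>z\<in>UNIV. A x z * (\<Sum>y\<in>UNIV. mpow A n z y))"
      by (simp add: sum_distrib_left) (rule sum.swap)
    also have "\<dots> = 1" using ih Suc.prems by (simp add: stochastic_sum)
    finally show "(\<Sum>y\<in>UNIV. mpow A (Suc n) x y) = 1" .
  qed
qed

lemma sum_fiber_cong:
  fixes f :: "'u::finite \<Rightarrow> 's::finite"
  shows "(\<Sum>w\<in>UNIV. \<Sum>\<zeta>\<in>{\<zeta>. f \<zeta> = w}. g \<zeta>) = (\<Sum>\<zeta>\<in>UNIV. g \<zeta>)"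
  using sum.group[of UNIV UNIV f g] by (simp add: eq_commute)

lemma mpow_dynkin:
  fixes f :: "'u::finite \<Rightarrow> 's::finite"
  assumes "\<And>\<eta> y. (\<Sum>\<xi>\<in>{\<xi>. f \<xi> = y}. K \<eta> \<xi>) = P (f \<eta>) y"
  shows "(\<Sum>\<xi>\<in>{\<xi>. f \<xi> = y}. mpow K n \<eta> \<xi>) = mpow P n (f \<eta>) y"
proof (induction n arbitrary: \<eta>)
  case 0
  have "(\<Sum>\<xi>\<in>{\<xi>. f \<xi> = y}. mpow K 0 \<eta> \<xi>) = (\<Sum>\<xi>\<in>{\<xi>. f \<xi> = y}. if \<eta> = \<xi> then 1 else 0)"
    by simp
  also have "\<dots> = (if f \<eta> = y then 1 else 0)"
    by (simp add: sum.delta)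
  finally show ?case by simp
next
  case (Suc n)
  have "(\<Sum>\<xi>\<in>{\<xi>. f \<xi> = y}. mpow K (Suc n) \<eta> \<xi>)
      = (\<Sum>\<zeta>\<in>UNIV. K \<eta> \<zeta> * (\<Sum>\<xi>\<in>{\<xi>. f \<xi> = y}. mpow K n \<zeta> \<xi>))"
    by (simp add: sum_distrib_left sum.swap[of _ "{\<xi>. f \<xi> = y}" UNIV])
  also have "\<dots> = (\<Sum>\<zeta>\<in>UNIV. K \<eta> \<zeta> * mpow P n (f \<zeta>) y)"
    by (simp add: Suc)
  also have "\<dots> = (\<Sum>w\<in>UNIV. \<Sum>\<zeta>\<in>{\<zeta>. f \<zeta> = w}. K \<eta> \<zeta> * mpow P n (f \<zeta>) y)"
    by (rule sum_fiber_cong[symmetric])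
  also have "\<dots> = (\<Sum>w\<in>UNIV. (\<Sum>\<zeta>\<in>{\<zeta>. f \<zeta> = w}. K \<eta> \<zeta>) * mpow P n w y)"
    by (simp add: sum_distrib_right)
  also have "\<dots> = (\<Sum>w\<in>UNIV. P (f \<eta>) w * mpow P n w y)"
    by (simp add: assms)
  finally show ?case by simp
qed

context
  fixes f :: "'u::finite \<Rightarrow> 's" and K :: "'t \<Rightarrow> 'u \<Rightarrow> 'u \<Rightarrow> real"
    and P :: "'t \<Rightarrow> 's \<Rightarrow> 's \<Rightarrow> real" and adm :: "'t \<Rightarrow> bool"
  assumes dyn: "\<And>d \<eta> y. adm d \<Longrightarrow> (\<Sum>\<xi>\<in>{\<xi>. f \<xi> = y}. K d \<eta> \<xi>) = P d (f \<eta>) y"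
begin

lemma paths_dynkin:
  "length ds = length xs \<Longrightarrow> (\<forall>d\<in>set ds. adm d) \<Longrightarrow>
     (\<Sum>ys\<in>{ys. length ys = length xs \<and> map f ys = xs}. path_prob K u (zip ds ys))
          = path_prob P (f u) (zip ds xs)"
proof (induction xs arbitrary: ds u)
  case Nil thus ?case by simp
next
  case (Cons x xs)
  then obtain d ds' where ds: "ds = d # ds'" by (cases ds) auto
  have set: "{ys. length ys = length (x # xs) \<and> map f ys = x # xs}
     = (\<lambda>(y, ys). y # ys) ` ({y. f y = x} \<times> {ys. length ys = length xs \<and> map f ys = xs})"
    by (auto simp: length_Suc_conv image_iff)
  have inj: "inj_on (\<lambda>(y, ys). y # ys) A" for A :: "('u \<times> 'u list) set"
    by (auto simp: inj_on_def)
  have "(\<Sum>ys\<in>{ys. length ys = length (x # xs) \<and> map f ys = x # xs}. path_prob K u (zip ds ys))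
     = (\<Sum>y\<in>{y. f y = x}. \<Sum>ys\<in>{ys. length ys = length xs \<and> map f ys = xs}.
           K d u y * path_prob K y (zip ds' ys))"
    unfolding set by (subst sum.reindex[OF inj]) (auto simp: sum.cartesian_product ds intro!: sum.cong)
  also have "\<dots> = (\<Sum>y\<in>{y. f y = x}. K d u y * path_prob P x (zip ds' xs))"
    using Cons by (auto simp: sum_distrib_left[symmetric] ds intro!: sum.cong)
  also have "\<dots> = P d (f u) x * path_prob P x (zip ds' xs)"
    using Cons.prems dyn[of d u x] by (simp add: sum_distrib_right[symmetric] ds)
  finally show ?case by (simp add: ds)
qed

lemma image_markov_dynkin: "image_markov K u f adm P (f u)"
  unfolding image_markov_def by (intro conjI refl allI impI paths_dynkin)

end

lemma image_markov_single:
  fixes f :: "'u::finite \<Rightarrow> 's"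
  assumes "image_markov K u f adm P x" "adm d"
  shows "(\<Sum>\<xi>\<in>{\<xi>. f \<xi> = y}. K d u \<xi>) = P d x y"
proof -
  have "(\<Sum>ys\<in>{ys. length ys = length [y] \<and> map f ys = [y]}. path_prob K u (zip [d] ys))
          = path_prob P x (zip [d] [y])"
  proof -
    have H: "\<forall>ds xs. length ds = length xs \<longrightarrow> (\<forall>d\<in>set ds. adm d) \<longrightarrow>
        (\<Sum>ys\<in>{ys. length ys = length xs \<and> map f ys = xs}. path_prob K u (zip ds ys))
          = path_prob P x (zip ds xs)"
      using assms(1) unfolding image_markov_def by (rule conjunct2)
    show ?thesis using H[rule_format, of "[d]" "[y]"] assms(2) by simp
  qed
  moreover have "{ys. length ys = length [y] \<and> map f ys = [y]} = (\<lambda>\<xi>. [\<xi>]) ` {\<xi>. f \<xi> = y}"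
    by (auto simp: length_Suc_conv)
  moreover have "inj (\<lambda>\<xi>::'u. [\<xi>])" by (auto simp: inj_def)
  ultimately show ?thesis by (simp add: sum.reindex inj_on_def)
qed

definition pw :: "real \<Rightarrow> nat \<Rightarrow> real" where
  "pw t n = exp (- t) * (t ^ n / fact n)"

definition poi :: "('s::finite \<Rightarrow> 's \<Rightarrow> real) \<Rightarrow> real \<Rightarrow> 's \<Rightarrow> 's \<Rightarrow> real" where
  "poi A t x y = (\<Sum>n. pw t n * mpow A n x y)"

lemma pw_sums: "pw t sums 1"
proof -
  have "(\<lambda>n. t ^ n / fact n) sums exp t"
    using exp_converges[of t] by (simp add: divide_inverse mult.commute)
  hence "(\<lambda>n. exp (- t) * (t ^ n / fact n)) sums (exp (- t) * exp t)"
    by (rule sums_mult)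
  moreover have "pw t = (\<lambda>n. exp (- t) * (t ^ n / fact n))" by (simp add: fun_eq_iff pw_def)
  moreover have "exp (- t) * exp t = 1" by (simp add: exp_minus)
  ultimately show ?thesis by simp
qed

lemma pw_nonneg: "0 \<le> t \<Longrightarrow> 0 \<le> pw t n"
  by (simp add: pw_def)

lemma summable_pw: "summable (pw t)"
  using pw_sums sums_summable by blast

lemma suminf_pw: "(\<Sum>n. pw t n) = 1"
  using pw_sums sums_unique by fastforce

lemma mpow_abs_le1: "stochastic A \<Longrightarrow> \<bar>mpow A n x y\<bar> \<le> 1"
  using mpow_stochastic[of A n] stochastic_nonneg[of "mpow A n"] stochastic_le1[of "mpow A n"]
  by (simp add: abs_le_iff)

lemma summable_poi_term:
  assumes "stochastic A" "0 \<le> t"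
  shows "summable (\<lambda>n. pw t n * mpow A n x y)"
proof (rule summable_comparison_test[OF _ summable_pw[of t]])
  show "\<exists>N. \<forall>n\<ge>N. norm (pw t n * mpow A n x y) \<le> pw t n"
    using mpow_abs_le1[OF assms(1)] pw_nonneg[OF assms(2)]
    by (auto simp: abs_mult intro!: mult_left_le)
qed

lemma summable_poi_term_c:
  assumes "stochastic A" "0 \<le> t"
  shows "summable (\<lambda>n. pw t n * (mpow A n x y - c))"
  using summable_diff[OF summable_poi_term[OF assms, of x y] summable_mult2[OF summable_pw, of t c]]
  by (simp add: algebra_simps)

lemma poi_nonneg: "stochastic A \<Longrightarrow> 0 \<le> t \<Longrightarrow> 0 \<le> poi A t x y"
  unfolding poi_def
  by (intro suminf_nonneg summable_poi_term) 
     (auto intro!: mult_nonneg_nonneg pw_nonneg stochastic_nonneg[OF mpow_stochastic])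

lemma poi_rowsum:
  assumes "stochastic A" "0 \<le> t"
  shows "(\<Sum>y\<in>UNIV. poi A t x y) = 1"
proof -
  have "(\<Sum>y\<in>UNIV. poi A t x y) = (\<Sum>n. \<Sum>y\<in>UNIV. pw t n * mpow A n x y)"
    unfolding poi_def by (rule suminf_sum[symmetric]) (rule summable_poi_term[OF assms])
  also have "\<dots> = (\<Sum>n. pw t n)"
    by (simp add: sum_distrib_left[symmetric] stochastic_sum[OF mpow_stochastic[OF assms(1)]])
  finally show ?thesis by (simp add: suminf_pw)
qed

lemma poi_stochastic: assumes "stochastic A" "0 \<le> t" shows "stochastic (poi A t)"
  unfolding stochastic_def using poi_nonneg[OF assms] poi_rowsum[OF assms] by blast

lemma poi_zero: "poi A 0 x y = (if x = y then 1 else 0)"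
proof -
  have "(\<lambda>n. pw 0 n * mpow A n x y) = (\<lambda>n. if n = 0 then mpow A 0 x y else 0)"
    by (auto simp: pw_def fun_eq_iff)
  moreover have "(\<lambda>n. if n = 0 then mpow A 0 x y else 0) sums (mpow A 0 x y)"
    by (rule sums_single)
  ultimately show ?thesis unfolding poi_def by (simp add: sums_iff)
qed

lemma pw_add: "pw (s + t) k = (\<Sum>i\<le>k. pw s i * pw t (k - i))"
proof -
  have "(s + t) ^ k / fact k = (\<Sum>i\<le>k. of_nat (k choose i) * s ^ i * t ^ (k - i) / fact k)"
    by (simp add: binomial_ring sum_divide_distrib)
  also have "\<dots> = (\<Sum>i\<le>k. (s ^ i / fact i) * (t ^ (k - i) / fact (k - i)))"
    by (intro sum.cong refl) (simp add: binomial_fact field_simps)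
  finally have binom: "(s + t) ^ k / fact k = (\<Sum>i\<le>k. (s ^ i / fact i) * (t ^ (k - i) / fact (k - i)))" .
  have e: "exp (- (s + t)) = exp (- s) * exp (- t)" by (simp add: exp_add[symmetric])
  show ?thesis
    unfolding pw_def e binom by (simp add: sum_distrib_left mult_ac)
qed

lemma poi_CK:
  assumes A: "stochastic A" and s: "0 \<le> s" and t: "0 \<le> t"
  shows "poi A (s + t) x y = (\<Sum>z\<in>UNIV. poi A s x z * poi A t z y)"
proof -
  define a where "a z i = pw s i * mpow A i x z" for z i
  define b where "b z i = pw t i * mpow A i z y" for z i
  have na: "summable (\<lambda>i. norm (a z i))" for z
    using summable_poi_term[OF A s] unfolding a_def
    by (simp add: abs_mult pw_nonneg[OF s] stochastic_nonneg[OF mpow_stochastic[OF A]])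
  have nb: "summable (\<lambda>i. norm (b z i))" for z
    using summable_poi_term[OF A t] unfolding b_def
    by (simp add: abs_mult pw_nonneg[OF t] stochastic_nonneg[OF mpow_stochastic[OF A]])
  have cs: "(\<lambda>k. \<Sum>i\<le>k. a z i * b z (k - i)) sums (poi A s x z * poi A t z y)" for z
    using Cauchy_product_sums[OF na nb] unfolding a_def b_def poi_def by simp
  have "(\<Sum>z\<in>UNIV. poi A s x z * poi A t z y) = (\<Sum>z\<in>UNIV. \<Sum>k. \<Sum>i\<le>k. a z i * b z (k - i))"
    using cs by (simp add: sums_iff)
  also have "\<dots> = (\<Sum>k. \<Sum>z\<in>UNIV. \<Sum>i\<le>k. a z i * b z (k - i))"
    by (rule suminf_sum[symmetric]) (use cs sums_summable in blast)
  also have "\<dots> = (\<Sum>k. pw (s + t) k * mpow A k x y)"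
  proof (rule arg_cong[where f = suminf], rule ext)
    fix k
    have "(\<Sum>z\<in>UNIV. \<Sum>i\<le>k. a z i * b z (k - i))
        = (\<Sum>i\<le>k. pw s i * pw t (k - i) * (\<Sum>z\<in>UNIV. mpow A i x z * mpow A (k - i) z y))"
      unfolding a_def b_def
      by (subst sum.swap) (intro sum.cong refl, simp add: sum_distrib_left mult_ac)
    also have "\<dots> = (\<Sum>i\<le>k. pw s i * pw t (k - i) * mpow A k x y)"
      by (intro sum.cong refl) (simp add: mpow_add[symmetric])
    also have "\<dots> = pw (s + t) k * mpow A k x y"
      by (simp add: pw_add sum_distrib_right)
    finally show "(\<Sum>z\<in>UNIV. \<Sum>i\<le>k. a z i * b z (k - i)) = pw (s + t) k * mpow A k x y" .
  qed
  finally show ?thesis unfolding poi_def by simp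
qed

lemma poi_deriv:
  assumes A: "stochastic A"
  shows "((\<lambda>t. (poi A t x y - (if x = y then 1 else 0)) / t)
            \<longlongrightarrow> (A x y - (if x = y then 1 else 0))) (at_right 0)"
proof -
  define \<delta> :: real where "\<delta> = (if x = y then 1 else 0)"
  define c where "c n = mpow A n x y - \<delta>" for n
  define e where "e t = (1 - exp (- t) - t * exp (- t)) / t" for t :: real
  have c0: "c 0 = 0" by (simp add: c_def \<delta>_def)
  have c1: "c (Suc 0) = A x y - \<delta>" by (simp add: c_def sum_delta_right)
  have cb: "\<bar>c n\<bar> \<le> 1" for n
    using stochastic_nonneg[OF mpow_stochastic[OF A], of n x y]
      stochastic_le1[OF mpow_stochastic[OF A], of n x y]
    by (auto simp: c_def \<delta>_def)
  have key: "norm ((poi A t x y - \<delta>) / t - exp (- t) * c 1) \<le> e t" if t: "0 < t" for t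
  proof -
    have sumc: "summable (\<lambda>n. pw t n * c n)"
      using summable_poi_term_c[OF A, of t] t by (simp add: c_def)
    have "poi A t x y - \<delta> = (\<Sum>n. pw t n * mpow A n x y) - (\<Sum>n. pw t n * \<delta>)"
      by (simp add: poi_def suminf_mult2[OF summable_pw, symmetric] suminf_pw)
    also have "\<dots> = (\<Sum>n. pw t n * c n)"
      by (subst suminf_diff[OF summable_poi_term[OF A] summable_mult2[OF summable_pw]])
         (use t in \<open>auto simp: c_def algebra_simps\<close>)
    also have "\<dots> = (\<Sum>n. pw t (n + 2) * c (n + 2)) + pw t 1 * c 1"
      by (subst suminf_split_initial_segment[OF sumc, of 2]) (simp add: c0 numeral_2_eq_2)
    finally have eq: "poi A t x y - \<delta> = (\<Sum>n. pw t (n + 2) * c (n + 2)) + pw t 1 * c 1" .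
    have sp2: "summable (\<lambda>n. pw t (n + 2))"
      using summable_pw summable_iff_shift by blast
    have "1 = (\<Sum>n. pw t (n + 2)) + pw t 1 + pw t 0"
      using suminf_split_initial_segment[OF summable_pw[of t], of 2]
      by (simp add: suminf_pw numeral_2_eq_2)
    moreover have "pw t 1 = t * exp (- t)" "pw t 0 = exp (- t)" by (simp_all add: pw_def)
    ultimately have sum2: "(\<Sum>n. pw t (n + 2)) = 1 - exp (- t) - t * exp (- t)"
      by linarith
    have bnd: "norm (\<Sum>n. pw t (n + 2) * c (n + 2)) \<le> (\<Sum>n. pw t (n + 2))"
    proof (rule norm_suminf_le[OF _ sp2])
      fix n
      show "norm (pw t (n + 2) * c (n + 2)) \<le> pw t (n + 2)"
      proof -
        have "norm (pw t (n + 2) * c (n + 2)) = pw t (n + 2) * \<bar>c (n + 2)\<bar>"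
          using pw_nonneg[of t "n+2"] t by (simp add: abs_mult)
        also have "\<dots> \<le> pw t (n + 2)"
          by (rule mult_left_le[OF cb pw_nonneg]) (use t in simp)
        finally show ?thesis .
      qed
    qed
    have "(poi A t x y - \<delta>) / t - exp (- t) * c 1 = (\<Sum>n. pw t (n + 2) * c (n + 2)) / t"
      unfolding eq using t by (simp add: pw_def field_simps)
    hence "norm ((poi A t x y - \<delta>) / t - exp (- t) * c 1) = norm (\<Sum>n. pw t (n + 2) * c (n + 2)) / t"
      using t by simp
    also have "\<dots> \<le> (\<Sum>n. pw t (n + 2)) / t"
      using bnd t by (simp add: divide_right_mono)
    finally show ?thesis unfolding e_def sum2[symmetric] .
  qed
  have e0: "(e \<longlongrightarrow> 0) (at_right 0)"
    unfolding e_def by real_asymp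
  have "((\<lambda>t. (poi A t x y - \<delta>) / t - exp (- t) * c 1) \<longlongrightarrow> 0) (at_right 0)"
    by (rule Lim_null_comparison[OF eventually_mono[OF eventually_at_right_less key] e0])
  moreover have "((\<lambda>t. exp (- t) * c 1) \<longlongrightarrow> exp (- 0) * c 1) (at_right 0)"
    by (intro tendsto_intros)
  ultimately have "((\<lambda>t. ((poi A t x y - \<delta>) / t - exp (- t) * c 1) + exp (- t) * c 1) \<longlongrightarrow> 0 + exp (- 0) * c 1) (at_right 0)"
    by (rule tendsto_add)
  thus ?thesis by (simp add: c1 \<delta>_def)
qed

lemma int_deriv_right:
  fixes f :: "real \<Rightarrow> real"
  assumes cont: "continuous_on {0..} f" and a: "0 \<le> a"
  shows "((\<lambda>h. integral {a..a+h} f / h) \<longlongrightarrow> f a) (at_right 0)"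
proof -
  have c: "continuous_on {a..a+1} f"
    by (rule continuous_on_subset[OF cont]) (use a in auto)
  have "((\<lambda>u. integral {a..u} f) has_vector_derivative f a) (at a within {a..a+1})"
    by (rule integral_has_vector_derivative[OF c]) auto
  hence "((\<lambda>u. integral {a..u} f) has_field_derivative f a) (at a within {a..a+1})"
    by (simp add: has_real_derivative_iff_has_vector_derivative)
  hence "((\<lambda>u. (integral {a..u} f - integral {a..a} f) / (u - a)) \<longlongrightarrow> f a) (at a within {a..a+1})"
    by (simp add: has_field_derivative_iff)
  hence "((\<lambda>u. (integral {a..u} f - integral {a..a} f) / (u - a)) \<longlongrightarrow> f a) (at_right a)"
    by (simp add: at_within_Icc_at_right)
  hence "((\<lambda>h. (integral {a..h + a} f - integral {a..a} f) / (h + a - a)) \<longlongrightarrow> f a) (at_right 0)"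
    by (simp add: filterlim_at_right_to_0[of _ _ a])
  thus ?thesis by (simp add: add.commute)
qed

lemma diag_dom_inv:
  fixes A :: "'s::finite \<Rightarrow> 's \<Rightarrow> real"
  assumes small: "\<And>x y. \<bar>A x y - (if x = y then 1 else 0)\<bar> \<le> 1 / (2 * real CARD('s))"
  shows "\<exists>V. \<forall>x y. (\<Sum>z\<in>UNIV. A x z * V z y) = (if x = y then 1 else 0)"
proof -
  define M :: "real^'s^'s" where "M = (\<chi> i j. A i j)"
  have ker: "v = 0" if Mv: "M *v v = 0" for v :: "real^'s"
  proof -
    define m where "m = Max (range (\<lambda>y. \<bar>v $ y\<bar>))"
    have "m \<in> range (\<lambda>y. \<bar>v $ y\<bar>)" unfolding m_def by (rule Max_in) auto
    then obtain x0 where x0: "\<bar>v $ x0\<bar> = m" by auto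
    have le: "\<bar>v $ y\<bar> \<le> \<bar>v $ x0\<bar>" for y
    proof -
      have "\<bar>v $ y\<bar> \<le> m" unfolding m_def by (rule Max_ge) auto
      thus ?thesis using x0 by simp
    qed
    have pt: "\<bar>A x0 y - (if x0 = y then 1 else 0)\<bar> * \<bar>v $ y\<bar> \<le> (1 / (2 * real CARD('s))) * \<bar>v $ x0\<bar>" for y
      by (rule mult_mono) (use small le in auto)
    have row: "(\<Sum>y\<in>UNIV. A x0 y * v $ y) = 0"
      using Mv unfolding M_def by (simp add: matrix_vector_mult_def vec_eq_iff)
    have "(\<Sum>y\<in>UNIV. A x0 y * v $ y)
        = (\<Sum>y\<in>UNIV. (if x0 = y then 1 else 0) * v $ y) + (\<Sum>y\<in>UNIV. (A x0 y - (if x0 = y then 1 else 0)) * v $ y)"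
      by (simp add: sum.distrib[symmetric] algebra_simps)
    also have "(\<Sum>y\<in>UNIV. (if x0 = y then 1 else 0) * v $ y) = v $ x0"
      by (rule sum_delta_left)
    finally have eq: "v $ x0 = - (\<Sum>y\<in>UNIV. (A x0 y - (if x0 = y then 1 else 0)) * v $ y)"
      using row by simp
    have "\<bar>v $ x0\<bar> \<le> (\<Sum>y\<in>UNIV. \<bar>(A x0 y - (if x0 = y then 1 else 0)) * v $ y\<bar>)"
      unfolding eq abs_minus_cancel by (rule sum_abs)
    also have "\<dots> \<le> (\<Sum>y\<in>(UNIV::'s set). (1 / (2 * real CARD('s))) * \<bar>v $ x0\<bar>)"
      unfolding abs_mult by (rule sum_mono) (rule pt)
    also have "\<dots> = \<bar>v $ x0\<bar> / 2"
      by simp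
    finally have "\<bar>v $ x0\<bar> \<le> 0" by simp
    hence "\<bar>v $ y\<bar> \<le> 0" for y using le[of y] by linarith
    thus "v = 0" by (simp add: vec_eq_iff)
  qed
  obtain B where "B ** M = mat 1"
    using ker matrix_left_invertible_ker[of M] by blast
  hence MB: "M ** B = mat 1" by (simp add: matrix_left_right_inverse)
  show ?thesis
  proof (intro exI allI)
    fix x y
    have "(M ** B) $ x $ y = (mat 1 :: real^'s^'s) $ x $ y" using MB by simp
    thus "(\<Sum>z\<in>UNIV. A x z * B $ z $ y) = (if x = y then 1 else 0)"
      unfolding M_def by (simp add: matrix_matrix_mult_def mat_def)
  qed
qed

context
  fixes P :: "real \<Rightarrow> 's::finite \<Rightarrow> 's \<Rightarrow> real"
  assumes ms: "markov_semigroup P"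
begin

lemma ms_stoch: "0 \<le> t \<Longrightarrow> stochastic (P t)"
  using ms by (simp add: markov_semigroup_def)

lemma ms_zero: "P 0 x y = (if x = y then 1 else 0)"
  using ms by (simp add: markov_semigroup_def)

lemma ms_CK: "0 \<le> s \<Longrightarrow> 0 \<le> t \<Longrightarrow> P (s + t) x y = (\<Sum>z\<in>UNIV. P s x z * P t z y)"
  using ms by (simp add: markov_semigroup_def)

lemma ms_rc0: "((\<lambda>t. P t x y) \<longlongrightarrow> (if x = y then 1 else 0)) (at_right 0)"
  using ms by (simp add: markov_semigroup_def)

lemma ms_nonneg: "0 \<le> t \<Longrightarrow> 0 \<le> P t x y"
  using ms_stoch stochastic_nonneg by blast

lemma ms_le1: "0 \<le> t \<Longrightarrow> P t x y \<le> 1"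
  using ms_stoch stochastic_le1 by blast

lemma ms_right: assumes t: "0 \<le> t" shows "((\<lambda>s. P s x y) \<longlongrightarrow> P t x y) (at_right t)"
proof -
  have "((\<lambda>h. \<Sum>z\<in>UNIV. P t x z * P h z y) \<longlongrightarrow> (\<Sum>z\<in>UNIV. P t x z * (if z = y then 1 else 0))) (at_right 0)"
    by (intro tendsto_intros ms_rc0)
  hence lim: "((\<lambda>h. \<Sum>z\<in>UNIV. P t x z * P h z y) \<longlongrightarrow> P t x y) (at_right 0)"
    by (simp add: sum_delta_right)
  have ev: "eventually (\<lambda>h. (\<Sum>z\<in>UNIV. P t x z * P h z y) = P (h + t) x y) (at_right 0)"
    using eventually_at_right_less[of "0::real"]
    by eventually_elim (subst add.commute, use t in \<open>simp add: ms_CK\<close>)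
  have "((\<lambda>h. P (h + t) x y) \<longlongrightarrow> P t x y) (at_right 0)"
    by (rule Lim_transform_eventually[OF lim ev])
  thus ?thesis by (simp add: filterlim_at_right_to_0[of _ _ t])
qed

lemma ms_left: assumes t: "0 < t" shows "((\<lambda>s. P s x y) \<longlongrightarrow> P t x y) (at_left t)"
proof -
  define g where "g h = (\<Sum>z\<in>UNIV. \<bar>(if z = y then 1 else 0) - P h z y\<bar>)" for h
  have g0: "(g \<longlongrightarrow> 0) (at_right 0)"
  proof -
    have "(g \<longlongrightarrow> (\<Sum>z\<in>UNIV. \<bar>(if z = y then 1 else 0) - (if z = y then 1 else 0)\<bar>)) (at_right 0)"
      unfolding g_def by (intro tendsto_intros ms_rc0)
    thus ?thesis by simp
  qed
  have bnd: "norm (P (t - h) x y - P t x y) \<le> g h" if h: "0 < h" "h < t" for h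
  proof -
    have "P t x y = P ((t - h) + h) x y" by simp
    also have "\<dots> = (\<Sum>z\<in>UNIV. P (t - h) x z * P h z y)"
      using h by (intro ms_CK) auto
    finally have "P (t - h) x y - P t x y = (\<Sum>z\<in>UNIV. P (t - h) x z * ((if z = y then 1 else 0) - P h z y))"
      by (simp add: sum_delta_right right_diff_distrib sum_subtractf)
    hence "norm (P (t - h) x y - P t x y) \<le> (\<Sum>z\<in>UNIV. \<bar>P (t - h) x z * ((if z = y then 1 else 0) - P h z y)\<bar>)"
      by (simp add: sum_abs)
    also have "\<dots> \<le> g h"
      unfolding g_def abs_mult
      by (intro sum_mono mult_left_le_one_le) (use h ms_nonneg ms_le1 in auto)
    finally show ?thesis .
  qed
  have "((\<lambda>h. P (t - h) x y - P t x y) \<longlongrightarrow> 0) (at_right 0)"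
  proof (rule Lim_null_comparison[OF _ g0])
    show "eventually (\<lambda>h. norm (P (t - h) x y - P t x y) \<le> g h) (at_right 0)"
      unfolding eventually_at_right_field using t bnd by (intro exI[of _ t]) auto
  qed
  hence "((\<lambda>h. P (t - h) x y - P t x y + P t x y) \<longlongrightarrow> 0 + P t x y) (at_right 0)"
    by (intro tendsto_intros)
  hence "((\<lambda>h. P (t - h) x y) \<longlongrightarrow> P t x y) (at_right 0)" by simp
  hence "((\<lambda>h. P (- (h + - t)) x y) \<longlongrightarrow> P t x y) (at_right 0)" by simp
  thus ?thesis
    by (simp add: filterlim_at_left_to_right filterlim_at_right_to_0[of _ _ "-t"])
qed

lemma ms_cont: "continuous_on {0..} (\<lambda>s. P s x y)"
  unfolding continuous_on_eq_continuous_within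
proof
  fix t :: real assume "t \<in> {0..}"
  hence t: "0 \<le> t" by simp
  show "continuous (at t within {0..}) (\<lambda>s. P s x y)"
    unfolding continuous_within
  proof (cases "t = 0")
    case True
    thus "((\<lambda>s. P s x y) \<longlongrightarrow> P t x y) (at t within {0..})"
      using ms_right[of 0] by (simp add: at_within_Ici_at_right)
  next
    case False
    hence "0 < t" using t by simp
    hence "((\<lambda>s. P s x y) \<longlongrightarrow> P t x y) (at t)"
      using ms_left ms_right t by (simp add: filterlim_at_split)
    thus "((\<lambda>s. P s x y) \<longlongrightarrow> P t x y) (at t within {0..})"
      by (rule tendsto_mono[OF at_le, rotated]) simp
  qed
qed

lemma ms_integrable: "0 \<le> a \<Longrightarrow> (\<lambda>s. P s x y) integrable_on {a..b}"
  by (rule integrable_continuous_real, rule continuous_on_subset[OF ms_cont]) auto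

lemma ms_shift:
  assumes h: "0 \<le> h" and e: "0 \<le> e"
  shows "(\<Sum>z\<in>UNIV. P h x z * integral {0..e} (\<lambda>s. P s z y)) = integral {h..h+e} (\<lambda>s. P s x y)"
proof -
  have "(\<Sum>z\<in>UNIV. P h x z * integral {0..e} (\<lambda>s. P s z y))
      = (\<Sum>z\<in>UNIV. integral {0..e} (\<lambda>s. P h x z * P s z y))"
    by simp
  also have "\<dots> = integral {0..e} (\<lambda>s. \<Sum>z\<in>UNIV. P h x z * P s z y)"
    by (rule Henstock_Kurzweil_Integration.integral_sum[symmetric])
       (auto intro!: integrable_on_mult_right ms_integrable)
  also have "\<dots> = integral {0..e} (\<lambda>s. P (h + s) x y)"
    by (rule integral_cong) (use h in \<open>simp add: ms_CK\<close>)
  also have "\<dots> = integral {0..e} ((\<lambda>s. P s x y) \<circ> ((+) h))"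
    by (simp add: o_def)
  also have "\<dots> = integral {0+h..e+h} (\<lambda>s. P s x y)"
    by (rule integral_shift_Icc_real)
  finally show ?thesis by (simp add: add.commute)
qed

lemma ms_gen_exists:
  "\<exists>Q. \<forall>x y. ((\<lambda>t. (P t x y - (if x = y then 1 else 0)) / t) \<longlongrightarrow> Q x y) (at_right 0)"
proof -
  define c :: real where "c = 1 / (2 * real CARD('s))"
  have cpos: "0 < c" unfolding c_def by simp
  have lim0: "((\<lambda>h. integral {0..0+h} (\<lambda>s. P s x y) / h) \<longlongrightarrow> P 0 x y) (at_right 0)" for x y
    by (rule int_deriv_right[OF ms_cont]) simp
  have "eventually (\<lambda>h. \<bar>integral {0..0+h} (\<lambda>s. P s x y) / h - P 0 x y\<bar> < c) (at_right 0)" for x y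
    using tendstoD[OF lim0[of x y] cpos] by (simp add: dist_real_def)
  hence "eventually (\<lambda>h. \<forall>x. \<bar>integral {0..0+h} (\<lambda>s. P s x y) / h - P 0 x y\<bar> < c) (at_right 0)" for y
    by (rule eventually_all_finite)
  hence "eventually (\<lambda>h. \<forall>y x. \<bar>integral {0..0+h} (\<lambda>s. P s x y) / h - P 0 x y\<bar> < c) (at_right 0)"
    by (rule eventually_all_finite)
  moreover have "eventually (\<lambda>h. 0 < h) (at_right (0::real))"
    by (rule eventually_at_right_less)
  ultimately have ev: "eventually (\<lambda>h. 0 < h \<and> (\<forall>y x. \<bar>integral {0..0+h} (\<lambda>s. P s x y) / h - P 0 x y\<bar> < c)) (at_right 0)"
    by eventually_elim auto
  then obtain e where e: "0 < e" and close: "\<And>x y. \<bar>integral {0..e} (\<lambda>s. P s x y) / e - P 0 x y\<bar> < c"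
    using eventually_happens[OF ev] trivial_limit_at_right_real by auto
  define W where "W x y = integral {0..e} (\<lambda>s. P s x y)" for x y
  obtain V where V: "\<And>x y. (\<Sum>z\<in>UNIV. W x z / e * V z y) = (if x = y then 1 else 0)"
    using diag_dom_inv[of "\<lambda>x y. W x y / e"] close less_imp_le unfolding W_def c_def ms_zero
    by blast
  define V' where "V' z y = V z y / e" for z y
  have V': "(\<Sum>z\<in>UNIV. W x z * V' z y) = (if x = y then 1 else 0)" for x y
    using V[of x y] by (simp add: V'_def)
  have key: "((\<lambda>h. \<Sum>z\<in>UNIV. (P h x z - (if x = z then 1 else 0)) / h * W z w)
               \<longlongrightarrow> P e x w - (if x = w then 1 else 0)) (at_right 0)" for x w
  proof -
    have "((\<lambda>h. integral {e..e+h} (\<lambda>s. P s x w) / h - integral {0..0+h} (\<lambda>s. P s x w) / h)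
            \<longlongrightarrow> P e x w - P 0 x w) (at_right 0)"
      by (intro tendsto_diff int_deriv_right[OF ms_cont]) (use e in auto)
    moreover have "eventually (\<lambda>h. integral {e..e+h} (\<lambda>s. P s x w) / h - integral {0..0+h} (\<lambda>s. P s x w) / h
       = (\<Sum>z\<in>UNIV. (P h x z - (if x = z then 1 else 0)) / h * W z w)) (at_right 0)"
      using eventually_at_right_less[of "0::real"]
    proof eventually_elim
      case (elim h)
      have int1: "integral {0..h} (\<lambda>s. P s x w) + integral {h..h+e} (\<lambda>s. P s x w) = integral {0..h+e} (\<lambda>s. P s x w)"
        by (rule Henstock_Kurzweil_Integration.integral_combine) (use elim e in \<open>auto intro: ms_integrable\<close>)
      have int2: "integral {0..e} (\<lambda>s. P s x w) + integral {e..e+h} (\<lambda>s. P s x w) = integral {0..h+e} (\<lambda>s. P s x w)"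
        using Henstock_Kurzweil_Integration.integral_combine[of 0 e "h+e" "\<lambda>s. P s x w"] elim e ms_integrable[of 0 x w "h+e"]
        by (simp add: add.commute)
      have "(\<Sum>z\<in>UNIV. (P h x z - (if x = z then 1 else 0)) / h * W z w)
          = ((\<Sum>z\<in>UNIV. P h x z * W z w) - (\<Sum>z\<in>UNIV. (if x = z then 1 else 0) * W z w)) / h"
        by (simp add: sum_divide_distrib[symmetric] sum_subtractf[symmetric] left_diff_distrib)
      also have "\<dots> = (integral {h..h+e} (\<lambda>s. P s x w) - W x w) / h"
        unfolding W_def by (subst ms_shift) (use elim e in \<open>auto simp: sum_delta_left\<close>)
      also have "\<dots> = integral {e..e+h} (\<lambda>s. P s x w) / h - integral {0..0+h} (\<lambda>s. P s x w) / h"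
        using int1 int2 unfolding W_def by (simp add: diff_divide_distrib[symmetric])
      finally show ?case by simp
    qed
    ultimately show ?thesis
      by (simp add: ms_zero Lim_transform_eventually)
  qed
  define Q where "Q x y = (\<Sum>w\<in>UNIV. (P e x w - (if x = w then 1 else 0)) * V' w y)" for x y
  show ?thesis
  proof (intro exI allI)
    fix x y
    have lim: "((\<lambda>h. \<Sum>w\<in>UNIV. (\<Sum>z\<in>UNIV. (P h x z - (if x = z then 1 else 0)) / h * W z w) * V' w y)
                \<longlongrightarrow> Q x y) (at_right 0)"
      unfolding Q_def by (intro tendsto_sum tendsto_mult_right key)
    have eq: "(\<Sum>w\<in>UNIV. (\<Sum>z\<in>UNIV. (P h x z - (if x = z then 1 else 0)) / h * W z w) * V' w y)
            = (P h x y - (if x = y then 1 else 0)) / h" for h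
    proof -
      have "(\<Sum>w\<in>UNIV. (\<Sum>z\<in>UNIV. (P h x z - (if x = z then 1 else 0)) / h * W z w) * V' w y)
          = (\<Sum>z\<in>UNIV. (P h x z - (if x = z then 1 else 0)) / h * (\<Sum>w\<in>UNIV. W z w * V' w y))"
        by (simp add: sum_distrib_left sum_distrib_right mult.assoc) (rule sum.swap)
      also have "\<dots> = (\<Sum>z\<in>UNIV. (P h x z - (if x = z then 1 else 0)) / h * (if z = y then 1 else 0))"
        by (simp add: V')
      also have "\<dots> = (P h x y - (if x = y then 1 else 0)) / h"
        by (rule sum_delta_right)
      finally show ?thesis .
    qed
    show "((\<lambda>t. (P t x y - (if x = y then 1 else 0)) / t) \<longlongrightarrow> Q x y) (at_right 0)"
      using lim unfolding eq .
  qed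
qed

end

lemma rb1:
  fixes S A :: "'s::finite \<Rightarrow> 's \<Rightarrow> real"
  assumes S: "stochastic S" and c: "\<And>z. (\<Sum>y\<in>UNIV. \<bar>A z y\<bar>) \<le> c"
  shows "(\<Sum>y\<in>UNIV. \<bar>\<Sum>z\<in>UNIV. S x z * A z y\<bar>) \<le> c"
proof -
  have "(\<Sum>y\<in>UNIV. \<bar>\<Sum>z\<in>UNIV. S x z * A z y\<bar>) \<le> (\<Sum>y\<in>UNIV. \<Sum>z\<in>UNIV. S x z * \<bar>A z y\<bar>)"
    by (rule sum_mono) (use stochastic_nonneg[OF S] in \<open>auto intro: order_trans[OF sum_abs] simp: abs_mult\<close>)
  also have "\<dots> = (\<Sum>z\<in>UNIV. S x z * (\<Sum>y\<in>UNIV. \<bar>A z y\<bar>))"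
    by (simp add: sum_distrib_left) (rule sum.swap)
  also have "\<dots> \<le> (\<Sum>z\<in>UNIV. S x z * c)"
    by (rule sum_mono) (use stochastic_nonneg[OF S] c in \<open>auto intro: mult_left_mono\<close>)
  also have "\<dots> = c"
    by (simp add: sum_distrib_right[symmetric] stochastic_sum[OF S])
  finally show ?thesis .
qed

lemma rb2:
  fixes S A :: "'s::finite \<Rightarrow> 's \<Rightarrow> real"
  assumes S: "stochastic S" and c: "(\<Sum>z\<in>UNIV. \<bar>A x z\<bar>) \<le> c"
  shows "(\<Sum>y\<in>UNIV. \<bar>\<Sum>z\<in>UNIV. A x z * S z y\<bar>) \<le> c"
proof -
  have "(\<Sum>y\<in>UNIV. \<bar>\<Sum>z\<in>UNIV. A x z * S z y\<bar>) \<le> (\<Sum>y\<in>UNIV. \<Sum>z\<in>UNIV. \<bar>A x z\<bar> * S z y)"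
    by (rule sum_mono) (use stochastic_nonneg[OF S] in \<open>auto intro: order_trans[OF sum_abs] simp: abs_mult\<close>)
  also have "\<dots> = (\<Sum>z\<in>UNIV. \<bar>A x z\<bar> * (\<Sum>y\<in>UNIV. S z y))"
    by (simp add: sum_distrib_left) (rule sum.swap)
  also have "\<dots> = (\<Sum>z\<in>UNIV. \<bar>A x z\<bar>)"
    by (simp add: stochastic_sum[OF S])
  finally show ?thesis using c by linarith
qed

lemma gen_unique:
  fixes P R :: "real \<Rightarrow> 's::finite \<Rightarrow> 's \<Rightarrow> real"
  assumes P: "markov_semigroup P" and R: "markov_semigroup R"
    and gP: "\<And>x y. ((\<lambda>t. (P t x y - (if x = y then 1 else 0)) / t) \<longlongrightarrow> Q x y) (at_right 0)"
    and gR: "\<And>x y. ((\<lambda>t. (R t x y - (if x = y then 1 else 0)) / t) \<longlongrightarrow> Q x y) (at_right 0)"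
    and t: "0 \<le> t"
  shows "P t x y = R t x y"
proof -
  have ind: "(\<Sum>y\<in>UNIV. \<bar>P (real n * \<tau>) x y - R (real n * \<tau>) x y\<bar>) \<le> real n * c"
    if tau: "0 \<le> \<tau>" and c: "\<And>x. (\<Sum>y\<in>UNIV. \<bar>P \<tau> x y - R \<tau> x y\<bar>) \<le> c" for \<tau> c n x
  proof (induction n arbitrary: x)
    case 0
    thus ?case using ms_zero[OF P] ms_zero[OF R] by simp
  next
    case (Suc n)
    have nt: "0 \<le> real n * \<tau>" using tau by simp
    have eq: "P (real (Suc n) * \<tau>) x y - R (real (Suc n) * \<tau>) x y
        = (\<Sum>z\<in>UNIV. P \<tau> x z * (P (real n * \<tau>) z y - R (real n * \<tau>) z y))
          + (\<Sum>z\<in>UNIV. (P \<tau> x z - R \<tau> x z) * R (real n * \<tau>) z y)" for y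
    proof -
      have "real (Suc n) * \<tau> = \<tau> + real n * \<tau>" by (simp add: algebra_simps)
      hence "P (real (Suc n) * \<tau>) x y - R (real (Suc n) * \<tau>) x y
          = (\<Sum>z\<in>UNIV. P \<tau> x z * P (real n * \<tau>) z y) - (\<Sum>z\<in>UNIV. R \<tau> x z * R (real n * \<tau>) z y)"
        using ms_CK[OF P tau nt] ms_CK[OF R tau nt] by simp
      also have "\<dots> = (\<Sum>z\<in>UNIV. P \<tau> x z * (P (real n * \<tau>) z y - R (real n * \<tau>) z y))
          + (\<Sum>z\<in>UNIV. (P \<tau> x z - R \<tau> x z) * R (real n * \<tau>) z y)"
        by (simp add: algebra_simps sum.distrib[symmetric] sum_subtractf[symmetric])
      finally show ?thesis .
    qed
    define a where "a y = (\<Sum>z\<in>UNIV. P \<tau> x z * (P (real n * \<tau>) z y - R (real n * \<tau>) z y))" for y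
    define b where "b y = (\<Sum>z\<in>UNIV. (P \<tau> x z - R \<tau> x z) * R (real n * \<tau>) z y)" for y
    have "(\<Sum>y\<in>UNIV. \<bar>P (real (Suc n) * \<tau>) x y - R (real (Suc n) * \<tau>) x y\<bar>)
        = (\<Sum>y\<in>UNIV. \<bar>a y + b y\<bar>)"
      unfolding a_def b_def eq ..
    also have "\<dots> \<le> (\<Sum>y\<in>UNIV. \<bar>a y\<bar> + \<bar>b y\<bar>)"
      by (rule sum_mono) (rule abs_triangle_ineq)
    also have "\<dots> = (\<Sum>y\<in>UNIV. \<bar>a y\<bar>) + (\<Sum>y\<in>UNIV. \<bar>b y\<bar>)"
      by (rule sum.distrib)
    also have "\<dots> \<le> real n * c + c"
      unfolding a_def b_def by (intro add_mono rb1[OF ms_stoch[OF P tau]] rb2[OF ms_stoch[OF R nt]] Suc.IH c)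
    finally show ?case by (simp add: algebra_simps)
  qed
  show ?thesis
  proof (cases "t = 0")
    case True thus ?thesis using ms_zero[OF P] ms_zero[OF R] by simp
  next
    case False
    hence tpos: "0 < t" using t by simp
    define g where "g h = (\<Sum>x\<in>UNIV. \<Sum>y\<in>UNIV. \<bar>(P h x y - (if x = y then 1 else 0)) / h - (R h x y - (if x = y then 1 else 0)) / h\<bar>)" for h
    have g0: "(g \<longlongrightarrow> 0) (at_right 0)"
    proof -
      have "(g \<longlongrightarrow> (\<Sum>x\<in>UNIV. \<Sum>y\<in>UNIV. \<bar>Q x y - Q x y\<bar>)) (at_right 0)"
        unfolding g_def by (intro tendsto_intros gP gR)
      thus ?thesis by simp
    qed
    have fl: "filterlim (\<lambda>n. t / real n) (at_right 0) sequentially"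
      unfolding filterlim_at
    proof
      show "\<forall>\<^sub>F n in sequentially. t / real n \<in> {0<..} \<and> t / real n \<noteq> 0"
        using eventually_gt_at_top[of "0::nat"] by eventually_elim (use tpos in auto)
      show "((\<lambda>n. t / real n) \<longlongrightarrow> 0) sequentially"
        by (rule lim_const_over_n)
    qed
    have lim: "((\<lambda>n. t * g (t / real n)) \<longlongrightarrow> t * 0) sequentially"
      by (intro tendsto_mult tendsto_const filterlim_compose[OF g0 fl])
    have bound: "(\<Sum>y\<in>UNIV. \<bar>P t x y - R t x y\<bar>) \<le> t * g (t / real n)" if n: "0 < n" for n
    proof -
      define h where "h = t / real n"
      have hpos: "0 < h" unfolding h_def using n tpos by simp
      define c where "c = (\<Sum>x\<in>UNIV. \<Sum>y\<in>UNIV. \<bar>P h x y - R h x y\<bar>)"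
      have crow: "(\<Sum>y\<in>UNIV. \<bar>P h x y - R h x y\<bar>) \<le> c" for x
        unfolding c_def by (rule member_le_sum[of x UNIV "\<lambda>x. \<Sum>y\<in>UNIV. \<bar>P h x y - R h x y\<bar>"]) (auto intro: sum_nonneg)
      have tn: "t = real n * h" unfolding h_def using n by simp
      have "(\<Sum>y\<in>UNIV. \<bar>P t x y - R t x y\<bar>) \<le> real n * c"
        unfolding tn by (rule ind[OF less_imp_le[OF hpos] crow])
      also have "real n * c = t * g h"
      proof -
        have "g h = c / h"
          unfolding g_def c_def sum_divide_distrib
          by (intro sum.cong refl) (use hpos in \<open>simp add: diff_divide_distrib[symmetric] abs_divide\<close>)
        thus ?thesis using tn hpos by simp
      qed
      finally show ?thesis unfolding h_def .
    qed
    have "(\<Sum>y\<in>UNIV. \<bar>P t x y - R t x y\<bar>) \<le> t * 0"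
    proof (rule tendsto_lowerbound[OF lim])
      show "\<forall>\<^sub>F i in sequentially. (\<Sum>y\<in>UNIV. \<bar>P t x y - R t x y\<bar>) \<le> t * g (t / real i)"
        using eventually_gt_at_top[of "0::nat"] by eventually_elim (rule bound)
    qed simp
    hence "(\<Sum>y\<in>UNIV. \<bar>P t x y - R t x y\<bar>) \<le> 0" by simp
    moreover have "\<bar>P t x y - R t x y\<bar> \<le> (\<Sum>y\<in>UNIV. \<bar>P t x y - R t x y\<bar>)"
      by (rule member_le_sum) auto
    ultimately show ?thesis by simp
  qed
qed

lemma filterlim_scale: assumes h: "0 < h" shows "filterlim (\<lambda>t. t / h) (at_right 0) (at_right (0::real))"
  unfolding filterlim_at
proof
  show "\<forall>\<^sub>F t in at_right 0. t / h \<in> {0<..} \<and> t / h \<noteq> 0"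
    using eventually_at_right_less[of "0::real"] by eventually_elim (use h in auto)
  have "((\<lambda>t. t / h) \<longlongrightarrow> 0 / h) (at_right 0)"
    using h by (intro tendsto_intros) auto
  thus "((\<lambda>t. t / h) \<longlongrightarrow> 0) (at_right 0)" by simp
qed

lemma poi_cont0:
  assumes A: "stochastic A"
  shows "((\<lambda>u. poi A u x y) \<longlongrightarrow> (if x = y then 1 else 0)) (at_right 0)"
proof -
  have "((\<lambda>u. u * ((poi A u x y - (if x = y then 1 else 0)) / u) + (if x = y then 1 else 0))
          \<longlongrightarrow> 0 * (A x y - (if x = y then 1 else 0)) + (if x = y then 1 else 0)) (at_right 0)"
    by (intro tendsto_intros poi_deriv[OF A]) 
  moreover have "eventually (\<lambda>u. u * ((poi A u x y - (if x = y then 1 else 0)) / u) + (if x = y then 1 else 0)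
      = poi A u x y) (at_right 0)"
    using eventually_at_right_less[of "0::real"] by eventually_elim auto
  ultimately show ?thesis by (simp add: Lim_transform_eventually)
qed

lemma poi_ms:
  assumes A: "stochastic A" and h: "0 < h"
  shows "markov_semigroup (\<lambda>t. poi A (t / h))"
  unfolding markov_semigroup_def
proof (intro conjI allI impI)
  fix t :: real assume "0 \<le> t"
  thus "stochastic (poi A (t / h))" using h by (intro poi_stochastic[OF A]) simp
next
  fix x y show "poi A (0 / h) x y = (if x = y then 1 else 0)" by (simp add: poi_zero)
next
  fix s t :: real and x y assume "0 \<le> s" "0 \<le> t"
  thus "poi A ((s + t) / h) x y = (\<Sum>z\<in>UNIV. poi A (s / h) x z * poi A (t / h) z y)"
    using h by (simp add: add_divide_distrib poi_CK[OF A])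
next
  fix x y
  show "((\<lambda>t. poi A (t / h) x y) \<longlongrightarrow> (if x = y then 1 else 0)) (at_right 0)"
    using filterlim_compose[OF poi_cont0[OF A] filterlim_scale[OF h]] by (simp add: o_def)
qed

lemma poi_gen_scaled:
  assumes A: "stochastic A" and h: "0 < h"
  shows "((\<lambda>t. (poi A (t / h) x y - (if x = y then 1 else 0)) / t)
           \<longlongrightarrow> (A x y - (if x = y then 1 else 0)) / h) (at_right 0)"
proof -
  have "((\<lambda>t. (poi A (t / h) x y - (if x = y then 1 else 0)) / (t / h)) \<longlongrightarrow> (A x y - (if x = y then 1 else 0))) (at_right 0)"
    using filterlim_compose[OF poi_deriv[OF A] filterlim_scale[OF h]] by (simp add: o_def)
  hence "((\<lambda>t. ((poi A (t / h) x y - (if x = y then 1 else 0)) / (t / h)) / h) \<longlongrightarrow> (A x y - (if x = y then 1 else 0)) / h) (at_right 0)"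
    using h by (intro tendsto_intros) auto
  moreover have "eventually (\<lambda>t. ((poi A (t / h) x y - (if x = y then 1 else 0)) / (t / h)) / h
      = (poi A (t / h) x y - (if x = y then 1 else 0)) / t) (at_right 0)"
    using eventually_at_right_less[of "0::real"] by eventually_elim (use h in auto)
  ultimately show ?thesis by (simp add: Lim_transform_eventually)
qed

lemma poi_dynkin:
  fixes f :: "'u::finite \<Rightarrow> 's::finite"
  assumes dyn: "\<And>\<eta> y. (\<Sum>\<xi>\<in>{\<xi>. f \<xi> = y}. K \<eta> \<xi>) = P (f \<eta>) y"
    and K: "stochastic K" and s: "0 \<le> s"
  shows "(\<Sum>\<xi>\<in>{\<xi>. f \<xi> = y}. poi K s \<eta> \<xi>) = poi P s (f \<eta>) y"
proof -
  have "(\<Sum>\<xi>\<in>{\<xi>. f \<xi> = y}. poi K s \<eta> \<xi>) = (\<Sum>n. \<Sum>\<xi>\<in>{\<xi>. f \<xi> = y}. pw s n * mpow K n \<eta> \<xi>)"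
    unfolding poi_def by (rule suminf_sum[symmetric]) (rule summable_poi_term[OF K s])
  also have "\<dots> = (\<Sum>n. pw s n * mpow P n (f \<eta>) y)"
    by (simp add: sum_distrib_left[symmetric] mpow_dynkin[where f=f and K=K and P=P, OF dyn])
  finally show ?thesis by (simp add: poi_def)
qed

lemma pos_sum_ex:
  fixes g :: "'b \<Rightarrow> real"
  assumes "0 < sum g A" shows "\<exists>x\<in>A. 0 < g x"
proof (rule ccontr)
  assume "\<not> ?thesis"
  hence "sum g A \<le> 0" by (intro sum_nonpos) (auto simp: not_less)
  thus False using assms by simp
qed

lemma mpow_support:
  assumes inv: "\<And>u v. Inv u \<Longrightarrow> 0 < A u v \<Longrightarrow> Inv v" and A: "stochastic A"
  shows "Inv u \<Longrightarrow> 0 < mpow A n u v \<Longrightarrow> Inv v"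
proof (induction n arbitrary: u)
  case 0 thus ?case by (simp split: if_splits)
next
  case (Suc n)
  then obtain \<zeta> where "0 < A u \<zeta> * mpow A n \<zeta> v"
    using pos_sum_ex[of "\<lambda>\<zeta>. A u \<zeta> * mpow A n \<zeta> v" UNIV] by auto
  moreover have "0 \<le> A u \<zeta>" "0 \<le> mpow A n \<zeta> v"
    using stochastic_nonneg[OF A] stochastic_nonneg[OF mpow_stochastic[OF A]] by auto
  ultimately have "0 < A u \<zeta>" "0 < mpow A n \<zeta> v"
    by (auto simp: zero_less_mult_iff)
  thus ?case using Suc inv by blast
qed

lemma poi_pos_ex:
  assumes A: "stochastic A" and s: "0 \<le> s" and pos: "0 < poi A s x y"
  shows "\<exists>n. 0 < mpow A n x y"
proof (rule ccontr)
  assume nt: "\<not> ?thesis"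
  have z: "mpow A n x y = 0" for n
  proof -
    have "mpow A n x y \<le> 0" using nt by (simp add: not_less)
    thus ?thesis using stochastic_nonneg[OF mpow_stochastic[OF A], of n x y] by linarith
  qed
  have "poi A s x y = 0" unfolding poi_def z by simp
  thus False using pos by simp
qed

lemma sum_fst_fiber:
  fixes g :: "('a::finite \<times> 'b::finite) \<Rightarrow> real"
  shows "(\<Sum>v\<in>{v. fst v = c}. g v) = (\<Sum>d\<in>UNIV. g (c, d))"
proof -
  have "{v. fst v = c} = (\<lambda>d. (c, d)) ` UNIV" by auto
  hence "(\<Sum>v\<in>{v. fst v = c}. g v) = sum g ((\<lambda>d. (c, d)) ` UNIV)" by (rule arg_cong)
  also have "\<dots> = sum (g \<circ> (\<lambda>d. (c, d))) UNIV"
    by (rule sum.reindex) (auto simp: inj_on_def)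
  finally show ?thesis by (simp add: o_def)
qed

lemma sum_snd_fiber:
  fixes g :: "('a::finite \<times> 'b::finite) \<Rightarrow> real"
  shows "(\<Sum>v\<in>{v. snd v = c}. g v) = (\<Sum>a\<in>UNIV. g (a, c))"
proof -
  have "{v. snd v = c} = (\<lambda>a. (a, c)) ` UNIV" by auto
  hence "(\<Sum>v\<in>{v. snd v = c}. g v) = sum g ((\<lambda>a. (a, c)) ` UNIV)" by (rule arg_cong)
  also have "\<dots> = sum (g \<circ> (\<lambda>a. (a, c))) UNIV"
    by (rule sum.reindex) (auto simp: inj_on_def)
  finally show ?thesis by (simp add: o_def)
qed

lemma sum_pair_UNIV:
  fixes g :: "('a::finite \<times> 'b::finite) \<Rightarrow> real"
  shows "(\<Sum>v\<in>UNIV. g v) = (\<Sum>a\<in>UNIV. \<Sum>b\<in>UNIV. g (a, b))"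
  by (simp add: sum.cartesian_product)

lemma neg_abs_mult: assumes h: "0 < h" shows "- (h * \<bar>q\<bar>) \<le> h * (q::real)"
proof -
  have "h * (- \<bar>q\<bar>) \<le> h * q" by (rule mult_left_mono) (use abs_ge_minus_self[of q] h in auto)
  thus ?thesis by simp
qed

theorem mainTheorem3:
  assumes "\<forall>P :: 'a::{order,finite} \<Rightarrow> 'a \<Rightarrow> real.
             stochastic P \<and> dt_stoch_monotone P \<longrightarrow> dt_realizably_monotone P"
  shows "\<forall>P :: real \<Rightarrow> 'a \<Rightarrow> 'a \<Rightarrow> real.
             markov_semigroup P \<and> ct_stoch_monotone P \<longrightarrow> ct_realizably_monotone P"
proof (intro allI impI, elim conjE)
  fix P :: "real \<Rightarrow> 'a \<Rightarrow> 'a \<Rightarrow> real"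
  assume ms: "markov_semigroup P" and sm: "ct_stoch_monotone P"
  have ev_pos: "eventually (\<lambda>t. 0 < t) (at_right (0::real))" by (rule eventually_at_right_less)
  obtain Q where Q: "\<And>x y. ((\<lambda>t. (P t x y - (if x = y then 1 else 0)) / t) \<longlongrightarrow> Q x y) (at_right 0)"
    using ms_gen_exists[OF ms] by blast
  have Qoff: "0 \<le> Q x y" if xy: "x \<noteq> y" for x y
  proof (rule tendsto_lowerbound[OF Q])
    show "\<forall>\<^sub>F t in at_right 0. 0 \<le> (P t x y - (if x = y then 1 else 0)) / t"
      using ev_pos
    proof eventually_elim
      case (elim t)
      thus ?case using xy ms_nonneg[OF ms, of t x y] by simp
    qed
  qed simp
  have Qsum: "(\<Sum>y\<in>UNIV. Q x y) = 0" for x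
  proof -
    have l1: "((\<lambda>t. \<Sum>y\<in>UNIV. (P t x y - (if x = y then 1 else 0)) / t) \<longlongrightarrow> (\<Sum>y\<in>UNIV. Q x y)) (at_right 0)"
      by (intro tendsto_sum Q)
    have "eventually (\<lambda>t. (\<Sum>y\<in>UNIV. (P t x y - (if x = y then 1 else 0)) / t) = 0) (at_right 0)"
      using ev_pos
    proof eventually_elim
      case (elim t)
      have "(\<Sum>y\<in>UNIV. (P t x y - (if x = y then 1 else 0)) / t)
          = ((\<Sum>y\<in>UNIV. P t x y) - (\<Sum>y\<in>UNIV. (if x = y then 1 else 0))) / t"
        by (simp add: sum_divide_distrib[symmetric] sum_subtractf)
      also have "\<dots> = 0" using stochastic_sum[OF ms_stoch[OF ms, of t]] elim by simp
      finally show ?case .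
    qed
    hence l2: "((\<lambda>t. \<Sum>y\<in>UNIV. (P t x y - (if x = y then 1 else 0)) / t) \<longlongrightarrow> 0) (at_right 0)"
      by (rule tendsto_eventually)
    show ?thesis using tendsto_unique[OF trivial_limit_at_right_real l1 l2] .
  qed

  define props where "props w z K \<longleftrightarrow> markov_semigroup K \<and> image_markov K (w, z) fst (\<lambda>t. 0 \<le> t) P w \<and>
        image_markov K (w, z) snd (\<lambda>t. 0 \<le> t) P z \<and> as_always K (w, z) (\<lambda>t. 0 \<le> t) (\<lambda>(a, b). a \<le> b)"
    for w z :: 'a and K :: "real \<Rightarrow> ('a \<times> 'a) \<Rightarrow> ('a \<times> 'a) \<Rightarrow> real"
  define Kp where "Kp w z = (SOME K. props w z K)" for w z
  have Kp: "props w z (Kp w z)" if wz: "w \<le> z" for w z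
  proof -
    have "\<exists>K. props w z K" using sm wz unfolding ct_stoch_monotone_def props_def by blast
    thus ?thesis unfolding Kp_def by (rule someI_ex)
  qed
  define R where "R w z = (SOME Rw. \<forall>v. ((\<lambda>t. (Kp w z t (w, z) v - (if (w, z) = v then 1 else 0)) / t) \<longlongrightarrow> Rw v) (at_right 0))" for w z
  have R: "((\<lambda>t. (Kp w z t (w, z) v - (if (w, z) = v then 1 else 0)) / t) \<longlongrightarrow> R w z v) (at_right 0)"
    if wz: "w \<le> z" for w z v
  proof -
    obtain Qk where Qk: "\<forall>x y. ((\<lambda>t. (Kp w z t x y - (if x = y then 1 else 0)) / t) \<longlongrightarrow> Qk x y) (at_right 0)"
      using ms_gen_exists[of "Kp w z"] Kp[OF wz] unfolding props_def by blast
    have "\<exists>Rw. \<forall>v. ((\<lambda>t. (Kp w z t (w, z) v - (if (w, z) = v then 1 else 0)) / t) \<longlongrightarrow> Rw v) (at_right 0)"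
      using Qk by (intro exI[of _ "Qk (w, z)"]) simp
    hence "\<forall>v. ((\<lambda>t. (Kp w z t (w, z) v - (if (w, z) = v then 1 else 0)) / t) \<longlongrightarrow> R w z v) (at_right 0)"
      unfolding R_def by (rule someI_ex)
    thus ?thesis by blast
  qed
  have Kpms: "markov_semigroup (Kp w z)" if "w \<le> z" for w z using Kp[OF that] unfolding props_def by blast
  have Kpfst: "image_markov (Kp w z) (w, z) fst (\<lambda>t. 0 \<le> t) P w" if "w \<le> z" for w z using Kp[OF that] unfolding props_def by blast
  have Kpsnd: "image_markov (Kp w z) (w, z) snd (\<lambda>t. 0 \<le> t) P z" if "w \<le> z" for w z using Kp[OF that] unfolding props_def by blast
  have Kpas: "as_always (Kp w z) (w, z) (\<lambda>t. 0 \<le> t) (\<lambda>(a, b). a \<le> b)" if "w \<le> z" for w z using Kp[OF that] unfolding props_def by blast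

  have Rnn: "0 \<le> R w z v" if wz: "w \<le> z" and v: "v \<noteq> (w, z)" for w z v
  proof (rule tendsto_lowerbound[OF R[OF wz]])
    show "\<forall>\<^sub>F t in at_right 0. 0 \<le> (Kp w z t (w, z) v - (if (w, z) = v then 1 else 0)) / t"
      using ev_pos
    proof eventually_elim
      case (elim t)
      thus ?case using v ms_nonneg[OF Kpms[OF wz], of t "(w, z)" v] by auto
    qed
  qed simp
  have Rsupp: "R w z v = 0" if wz: "w \<le> z" and nv: "\<not> (fst v \<le> snd v)" for w z v
  proof -
    have vne: "(w, z) \<noteq> v" using wz nv by auto
    have K0: "Kp w z t (w, z) v = 0" if t: "0 \<le> t" for t
    proof (rule ccontr)
      assume "Kp w z t (w, z) v \<noteq> 0"
      hence "0 < Kp w z t (w, z) v" using ms_nonneg[OF Kpms[OF wz] t, of "(w, z)" v] by simp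
      hence "case v of (a, b) \<Rightarrow> a \<le> b" using Kpas[OF wz] t unfolding as_always_def by blast
      thus False using nv by (auto split: prod.splits)
    qed
    have "eventually (\<lambda>t. (Kp w z t (w, z) v - (if (w, z) = v then 1 else 0)) / t = 0) (at_right 0)"
      using ev_pos by eventually_elim (use K0 vne in simp)
    hence "((\<lambda>t. (Kp w z t (w, z) v - (if (w, z) = v then 1 else 0)) / t) \<longlongrightarrow> 0) (at_right 0)"
      by (rule tendsto_eventually)
    thus ?thesis using tendsto_unique[OF trivial_limit_at_right_real R[OF wz]] by blast
  qed
  have Rfst: "(\<Sum>v\<in>{v. fst v = c}. R w z v) = Q w c" if wz: "w \<le> z" for w z c
  proof -
    have l1: "((\<lambda>t. \<Sum>v\<in>{v. fst v = c}. (Kp w z t (w, z) v - (if (w, z) = v then 1 else 0)) / t)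
        \<longlongrightarrow> (\<Sum>v\<in>{v. fst v = c}. R w z v)) (at_right 0)"
      by (intro tendsto_sum R[OF wz])
    have "eventually (\<lambda>t. (P t w c - (if w = c then 1 else 0)) / t
        = (\<Sum>v\<in>{v. fst v = c}. (Kp w z t (w, z) v - (if (w, z) = v then 1 else 0)) / t)) (at_right 0)"
      using ev_pos
    proof eventually_elim
      case (elim t)
      have "(\<Sum>v\<in>{v. fst v = c}. (Kp w z t (w, z) v - (if (w, z) = v then 1 else 0)) / t)
          = ((\<Sum>v\<in>{v. fst v = c}. Kp w z t (w, z) v) - (\<Sum>v\<in>{v. fst v = c}. (if (w, z) = v then 1 else 0))) / t"
        by (simp add: sum_divide_distrib[symmetric] sum_subtractf)
      also have "(\<Sum>v\<in>{v. fst v = c}. Kp w z t (w, z) v) = P t w c"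
        using image_markov_single[OF Kpfst[OF wz], of t c] elim by simp
      also have "(\<Sum>v\<in>{v. fst v = c}. (if (w, z) = v then 1 else (0::real))) = (if w = c then 1 else 0)"
        by simp
      finally show ?case by simp
    qed
    hence l2: "((\<lambda>t. \<Sum>v\<in>{v. fst v = c}. (Kp w z t (w, z) v - (if (w, z) = v then 1 else 0)) / t)
        \<longlongrightarrow> Q w c) (at_right 0)"
      by (rule Lim_transform_eventually[OF Q])
    show ?thesis using tendsto_unique[OF trivial_limit_at_right_real l1 l2] .
  qed
  have Rsnd: "(\<Sum>v\<in>{v. snd v = c}. R w z v) = Q z c" if wz: "w \<le> z" for w z c
  proof -
    have l1: "((\<lambda>t. \<Sum>v\<in>{v. snd v = c}. (Kp w z t (w, z) v - (if (w, z) = v then 1 else 0)) / t)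
        \<longlongrightarrow> (\<Sum>v\<in>{v. snd v = c}. R w z v)) (at_right 0)"
      by (intro tendsto_sum R[OF wz])
    have "eventually (\<lambda>t. (P t z c - (if z = c then 1 else 0)) / t
        = (\<Sum>v\<in>{v. snd v = c}. (Kp w z t (w, z) v - (if (w, z) = v then 1 else 0)) / t)) (at_right 0)"
      using ev_pos
    proof eventually_elim
      case (elim t)
      have "(\<Sum>v\<in>{v. snd v = c}. (Kp w z t (w, z) v - (if (w, z) = v then 1 else 0)) / t)
          = ((\<Sum>v\<in>{v. snd v = c}. Kp w z t (w, z) v) - (\<Sum>v\<in>{v. snd v = c}. (if (w, z) = v then 1 else 0))) / t"
        by (simp add: sum_divide_distrib[symmetric] sum_subtractf)
      also have "(\<Sum>v\<in>{v. snd v = c}. Kp w z t (w, z) v) = P t z c"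
        using image_markov_single[OF Kpsnd[OF wz], of t c] elim by simp
      also have "(\<Sum>v\<in>{v. snd v = c}. (if (w, z) = v then 1 else (0::real))) = (if z = c then 1 else 0)"
        by simp
      finally show ?case by simp
    qed
    hence l2: "((\<lambda>t. \<Sum>v\<in>{v. snd v = c}. (Kp w z t (w, z) v - (if (w, z) = v then 1 else 0)) / t)
        \<longlongrightarrow> Q z c) (at_right 0)"
      by (rule Lim_transform_eventually[OF Q])
    show ?thesis using tendsto_unique[OF trivial_limit_at_right_real l1 l2] .
  qed

  define D where "D = 1 + (\<Sum>x\<in>UNIV. \<bar>Q x x\<bar>) + (\<Sum>a\<in>UNIV. \<Sum>b\<in>UNIV. \<bar>R a b (a, b)\<bar>)"
  have D1: "1 \<le> D" unfolding D_def by (simp add: sum_nonneg add_increasing2)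
  define h where "h = 1 / D"
  have hpos: "0 < h" unfolding h_def using D1 by simp
  have hQ: "h * \<bar>Q x x\<bar> \<le> 1" for x
  proof -
    have "\<bar>Q x x\<bar> \<le> (\<Sum>x\<in>UNIV. \<bar>Q x x\<bar>)" by (rule member_le_sum) auto
    hence "\<bar>Q x x\<bar> \<le> D" unfolding D_def by (smt (verit) sum_nonneg abs_ge_zero)
    thus ?thesis unfolding h_def using D1 by simp
  qed
  have hR: "h * \<bar>R a b (a, b)\<bar> \<le> 1" for a b
  proof -
    have "\<bar>R a b (a, b)\<bar> \<le> (\<Sum>b\<in>UNIV. \<bar>R a b (a, b)\<bar>)" by (rule member_le_sum) auto
    also have "\<dots> \<le> (\<Sum>a\<in>UNIV. \<Sum>b\<in>UNIV. \<bar>R a b (a, b)\<bar>)"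
      by (rule member_le_sum) (auto intro: sum_nonneg)
    finally have "\<bar>R a b (a, b)\<bar> \<le> D" unfolding D_def by (smt (verit) sum_nonneg abs_ge_zero)
    thus ?thesis unfolding h_def using D1 by simp
  qed

  define M where "M x y = (if x = y then 1 else 0) + h * Q x y" for x y
  have Mstoch: "stochastic M"
    unfolding stochastic_def
  proof (intro conjI allI)
    fix x y show "0 \<le> M x y"
    proof (cases "x = y")
      case True
      have "- (h * \<bar>Q x x\<bar>) \<le> h * Q x x" by (rule neg_abs_mult[OF hpos])
      thus ?thesis using hQ[of x] True by (simp add: M_def)
    next
      case False thus ?thesis using Qoff[OF False] hpos by (simp add: M_def)
    qed
  next
    fix x show "(\<Sum>y\<in>UNIV. M x y) = 1"
      by (simp add: M_def sum.distrib sum_distrib_left[symmetric] Qsum)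
  qed
  have MQ: "(M x y - (if x = y then 1 else 0)) / h = Q x y" for x y
    using hpos by (simp add: M_def)

  define C where "C u v = (if fst u \<le> snd u then (if u = v then 1 else 0) + h * R (fst u) (snd u) v
                            else M (fst u) (fst v) * M (snd u) (snd v))" for u v :: "'a \<times> 'a"
  have Cstoch: "stochastic C"
    unfolding stochastic_def
  proof (intro conjI allI)
    fix u v :: "'a \<times> 'a"
    show "0 \<le> C u v"
    proof (cases "fst u \<le> snd u")
      case True
      show ?thesis
      proof (cases "u = v")
        case True
        have "- (h * \<bar>R (fst u) (snd u) u\<bar>) \<le> h * R (fst u) (snd u) u" by (rule neg_abs_mult[OF hpos])
        moreover have "h * \<bar>R (fst u) (snd u) u\<bar> \<le> 1" using hR[of "fst u" "snd u"] by simp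
        ultimately show ?thesis using \<open>fst u \<le> snd u\<close> True by (simp add: C_def)
      next
        case False
        hence "0 \<le> R (fst u) (snd u) v" using Rnn[OF \<open>fst u \<le> snd u\<close>, of v] by auto
        thus ?thesis using \<open>fst u \<le> snd u\<close> False hpos by (simp add: C_def)
      qed
    next
      case False
      thus ?thesis using stochastic_nonneg[OF Mstoch] by (simp add: C_def)
    qed
  next
    fix u :: "'a \<times> 'a"
    show "(\<Sum>v\<in>UNIV. C u v) = 1"
    proof (cases "fst u \<le> snd u")
      case True
      have "(\<Sum>v\<in>UNIV. R (fst u) (snd u) v) = (\<Sum>c\<in>UNIV. \<Sum>v\<in>{v. fst v = c}. R (fst u) (snd u) v)"
        by (rule sum_fiber_cong[symmetric])
      also have "\<dots> = 0" using Rfst[OF True] Qsum by simp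
      finally show ?thesis using True by (simp add: C_def sum.distrib sum_distrib_left[symmetric])
    next
      case False
      have "(\<Sum>v\<in>UNIV. C u v) = (\<Sum>a\<in>UNIV. \<Sum>b\<in>UNIV. M (fst u) a * M (snd u) b)"
        using False by (simp add: C_def sum_pair_UNIV)
      also have "\<dots> = 1"
        by (simp add: sum_distrib_left[symmetric] sum_distrib_right[symmetric] stochastic_sum[OF Mstoch])
      finally show ?thesis .
    qed
  qed
  have Cfst: "(\<Sum>v\<in>{v. fst v = c}. C u v) = M (fst u) c" for u c
  proof (cases "fst u \<le> snd u")
    case True
    have "(\<Sum>v\<in>{v. fst v = c}. C u v)
        = (\<Sum>v\<in>{v. fst v = c}. (if u = v then 1 else 0)) + h * (\<Sum>v\<in>{v. fst v = c}. R (fst u) (snd u) v)"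
      using True by (simp add: C_def sum.distrib sum_distrib_left)
    also have "\<dots> = (if fst u = c then 1 else 0) + h * Q (fst u) c"
      using Rfst[OF True] by simp
    finally show ?thesis by (simp add: M_def)
  next
    case False
    have "(\<Sum>v\<in>{v. fst v = c}. C u v) = (\<Sum>d\<in>UNIV. M (fst u) c * M (snd u) d)"
      using False by (simp add: C_def sum_fst_fiber)
    also have "\<dots> = M (fst u) c"
      by (simp add: sum_distrib_left[symmetric] stochastic_sum[OF Mstoch])
    finally show ?thesis .
  qed
  have Csnd: "(\<Sum>v\<in>{v. snd v = c}. C u v) = M (snd u) c" for u c
  proof (cases "fst u \<le> snd u")
    case True
    have "(\<Sum>v\<in>{v. snd v = c}. C u v)
        = (\<Sum>v\<in>{v. snd v = c}. (if u = v then 1 else 0)) + h * (\<Sum>v\<in>{v. snd v = c}. R (fst u) (snd u) v)"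
      using True by (simp add: C_def sum.distrib sum_distrib_left)
    also have "\<dots> = (if snd u = c then 1 else 0) + h * Q (snd u) c"
      using Rsnd[OF True] by simp
    finally show ?thesis by (simp add: M_def)
  next
    case False
    have "(\<Sum>v\<in>{v. snd v = c}. C u v) = (\<Sum>a\<in>UNIV. M (fst u) a * M (snd u) c)"
      using False by (simp add: C_def sum_snd_fiber)
    also have "\<dots> = M (snd u) c"
      by (simp add: sum_distrib_right[symmetric] stochastic_sum[OF Mstoch])
    finally show ?thesis .
  qed
  have Cinv: "(case v of (a, b) \<Rightarrow> a \<le> b)"
    if u: "(case u of (a, b) \<Rightarrow> a \<le> b)" and pos: "0 < C u v" for u v :: "'a \<times> 'a"
  proof -
    have u': "fst u \<le> snd u" using u by (auto split: prod.splits)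
    show ?thesis
    proof (cases "u = v")
      case True thus ?thesis using u by simp
    next
      case False
      hence "0 < h * R (fst u) (snd u) v" using pos u' by (simp add: C_def)
      hence "R (fst u) (snd u) v \<noteq> 0" by auto
      hence "fst v \<le> snd v" using Rsupp[OF u'] by blast
      thus ?thesis by (auto split: prod.splits)
    qed
  qed
  have dtm: "dt_stoch_monotone M"
    unfolding dt_stoch_monotone_def
  proof (intro allI impI)
    fix w z :: 'a assume wz: "w \<le> z"
    have i1: "image_markov (mpow C) (w, z) fst (\<lambda>_. True) (mpow M) (fst (w, z))"
      by (rule image_markov_dynkin) (rule mpow_dynkin, rule Cfst)
    have i2: "image_markov (mpow C) (w, z) snd (\<lambda>_. True) (mpow M) (snd (w, z))"
      by (rule image_markov_dynkin) (rule mpow_dynkin, rule Csnd)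
    have i3: "as_always (mpow C) (w, z) (\<lambda>_. True) (\<lambda>(a, b). a \<le> b)"
      unfolding as_always_def
    proof (intro allI impI)
      fix d v assume "0 < mpow C d (w, z) v"
      thus "case v of (a, b) \<Rightarrow> a \<le> b"
        using mpow_support[where Inv="\<lambda>(a, b). a \<le> b" and A=C and u="(w, z)" and n=d and v=v, OF Cinv Cstoch] wz by simp
    qed
    show "\<exists>K. stochastic K \<and> image_markov (mpow K) (w, z) fst (\<lambda>_. True) (mpow M) w \<and>
        image_markov (mpow K) (w, z) snd (\<lambda>_. True) (mpow M) z \<and>
        as_always (mpow K) (w, z) (\<lambda>_. True) (\<lambda>(a, b). a \<le> b)"
      using Cstoch i1 i2 i3 by auto
  qed

  obtain Kd :: "('a \<Rightarrow> 'a) \<Rightarrow> ('a \<Rightarrow> 'a) \<Rightarrow> real" where Kd: "stochastic Kd"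
    and Kdim: "\<And>z. image_markov (mpow Kd) id (\<lambda>\<xi>. \<xi> z) (\<lambda>_. True) (mpow M) z"
    and Kdas: "as_always (mpow Kd) id (\<lambda>_. True) mono"
    using assms Mstoch dtm unfolding dt_realizably_monotone_def by blast
  define \<mu> where "\<mu> \<xi> = Kd id \<xi>" for \<xi>
  have \<mu>nn: "0 \<le> \<mu> \<xi>" for \<xi> unfolding \<mu>_def using stochastic_nonneg[OF Kd] .
  have \<mu>sum: "(\<Sum>\<xi>\<in>UNIV. \<mu> \<xi>) = 1" unfolding \<mu>_def using stochastic_sum[OF Kd] .
  have \<mu>mono: "mono \<xi>" if "0 < \<mu> \<xi>" for \<xi>
    using Kdas that unfolding as_always_def \<mu>_def by (metis mpow_one)
  have \<mu>marg: "(\<Sum>\<xi>\<in>{\<xi>. \<xi> z = y}. \<mu> \<xi>) = M z y" for z y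
    using image_markov_single[OF Kdim[of z], of "Suc 0" y] unfolding \<mu>_def by (simp only: mpow_one)
  define Kc where "Kc \<eta> \<xi> = (\<Sum>\<zeta>\<in>{\<zeta>. \<zeta> \<circ> \<eta> = \<xi>}. \<mu> \<zeta>)" for \<eta> \<xi> :: "'a \<Rightarrow> 'a"
  have Kcstoch: "stochastic Kc"
    unfolding stochastic_def
  proof (intro conjI allI)
    fix \<eta> \<xi> show "0 \<le> Kc \<eta> \<xi>" unfolding Kc_def by (rule sum_nonneg) (rule \<mu>nn)
  next
    fix \<eta> :: "'a \<Rightarrow> 'a"
    show "(\<Sum>\<xi>\<in>UNIV. Kc \<eta> \<xi>) = 1"
      unfolding Kc_def using sum_fiber_cong[where f="\<lambda>\<zeta>. \<zeta> \<circ> \<eta>" and g=\<mu>] \<mu>sum by simp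
  qed
  have Kcdyn: "(\<Sum>\<xi>\<in>{\<xi>. \<xi> z = y}. Kc \<eta> \<xi>) = M (\<eta> z) y" for z y \<eta>
  proof -
    have "(\<Sum>\<xi>\<in>{\<xi>. \<xi> z = y}. Kc \<eta> \<xi>)
        = (\<Sum>\<xi>\<in>{\<xi>. \<xi> z = y}. sum \<mu> {\<zeta> \<in> {\<zeta>. \<zeta> (\<eta> z) = y}. \<zeta> \<circ> \<eta> = \<xi>})"
      unfolding Kc_def by (intro sum.cong refl arg_cong[where f="sum \<mu>"]) auto
    also have "\<dots> = sum \<mu> {\<zeta>. \<zeta> (\<eta> z) = y}"
      by (rule sum.group) auto
    finally show ?thesis using \<mu>marg by simp
  qed
  have Kcinv: "mono \<xi>" if m: "mono \<eta>" and p: "0 < Kc \<eta> \<xi>" for \<eta> \<xi> :: "'a \<Rightarrow> 'a"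
  proof -
    obtain \<zeta> where "\<zeta> \<in> {\<zeta>. \<zeta> \<circ> \<eta> = \<xi>}" "0 < \<mu> \<zeta>"
      using pos_sum_ex[of \<mu>] p unfolding Kc_def by blast
    hence "\<xi> = \<zeta> \<circ> \<eta>" "mono \<zeta>" using \<mu>mono by auto
    thus ?thesis using m by (auto simp: mono_def)
  qed

  have PM: "P t x y = poi M (t / h) x y" if t: "0 \<le> t" for t x y
    by (rule gen_unique[OF ms poi_ms[OF Mstoch hpos] Q _ t]) (use poi_gen_scaled[OF Mstoch hpos] MQ in simp)
  show "ct_realizably_monotone P"
    unfolding ct_realizably_monotone_def
  proof (intro exI conjI allI)
    show "markov_semigroup (\<lambda>t. poi Kc (t / h))" by (rule poi_ms[OF Kcstoch hpos])
  next
    fix z :: 'a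
    have "image_markov (\<lambda>t. poi Kc (t / h)) id (\<lambda>\<xi>. \<xi> z) (\<lambda>t. 0 \<le> t) P ((\<lambda>\<xi>. \<xi> z) id)"
    proof (rule image_markov_dynkin)
      fix d :: real and \<eta> :: "'a \<Rightarrow> 'a" and y assume d: "0 \<le> d"
      have "(\<Sum>\<xi>\<in>{\<xi>. \<xi> z = y}. poi Kc (d / h) \<eta> \<xi>) = poi M (d / h) (\<eta> z) y"
        by (rule poi_dynkin[OF Kcdyn Kcstoch]) (use d hpos in simp)
      also have "\<dots> = P d (\<eta> z) y" using PM[OF d] by simp
      finally show "(\<Sum>\<xi>\<in>{\<xi>. \<xi> z = y}. poi Kc (d / h) \<eta> \<xi>) = P d (\<eta> z) y" .
    qed
    thus "image_markov (\<lambda>t. poi Kc (t / h)) id (\<lambda>\<xi>. \<xi> z) (\<lambda>t. 0 \<le> t) P z" by simp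
  next
    show "as_always (\<lambda>t. poi Kc (t / h)) id (\<lambda>t. 0 \<le> t) mono"
      unfolding as_always_def
    proof (intro allI impI)
      fix d :: real and v :: "'a \<Rightarrow> 'a" assume d: "0 \<le> d" and pos: "0 < poi Kc (d / h) id v"
      obtain n where "0 < mpow Kc n id v"
        using poi_pos_ex[OF Kcstoch _ pos] d hpos by auto
      thus "mono v"
        using mpow_support[where Inv=mono and A=Kc and u=id and n=n and v=v, OF Kcinv Kcstoch] by (simp add: mono_def)
    qed
  qed
qed

end
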